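(* Let $H$ be a connected graph, $G_n$ a graph with $N(H,G_n)>0$, $p_n\in(0,1)$, and $\varepsilon>0$. Define $$M_n=\sum_{\substack{A\subset V(G_n)\\1\le|A|\le|V(H)|}}t_H(A)\,\mathbf 1\{t_H(A)>\varepsilon p_n^{|A|}N(H,G_n)\}.$$ Then (a) $\frac{M_n}{2^{|V(H)|}-1}\le N(H,G_n)-N_\varepsilon^+(H,G_n)\le M_n$, and (b) $\mathbb P(T(H,G_n)\ne T_\varepsilon^+(H,G_n))\le\frac{M_n}{\varepsilon N(H,G_n)}$.
   Context: $G_n$ is a simple labeled graph on $V(G_n)=\{1,\dots,|V(G_n)|\}$ with adjacency $(a_{ij})$; $H=(V(H),E(H))$ with $|Aut(H)|$ automorphisms. $V(G_n)_k$ is the set of $k$-tuples of distinct vertices, $\bar{\mathbf s}$ the set of entries. $M_H(\mathbf s)=\prod_{(i,j)\in E(H)}a_{s_is_j}$, $N(H,G_n)=\frac1{|Aut(H)|}\sum_{\mathbf s\in V(G_n)_{|V(H)|}}M_H(\mathbf s)$, $t_H(A)=\frac1{|Aut(H)|}\sum_{\mathbf s:\bar{\mathbf s}\supseteq A}M_H(\mathbf s)$. $\{X_v\}$ i.i.d. Bernoulli$(p_n)$, $X_{\mathbf s}=\prod_uX_{s_u}$, $T(H,G_n)=\frac1{|Aut(H)|}\sum_{\mathbf s}M_H(\mathbf s)X_{\mathbf s}$. For $\mathbf s\in V(G_n)_{|V(H)|}$ let $b_\varepsilon(\mathbf s)=1$ if $t_H(A)\le\varepsilon p_n^{|A|}N(H,G_n)$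 for every nonempty $A\subseteq\bar{\mathbf s}$, and $b_\varepsilon(\mathbf s)=0$ otherwise. Set $T_\varepsilon^+(H,G_n)=\frac1{|Aut(H)|}\sum_{\mathbf s}M_H(\mathbf s)X_{\mathbf s}b_\varepsilon(\mathbf s)$ and $N_\varepsilon^+(H,G_n)=p_n^{-|V(H)|}\mathbb E[T_\varepsilon^+(H,G_n)]$. *)

theory Defs
  imports "HOL-Probability.Probability"
begin

(* H: simple graph on vertex set {0..<k}, adjacency adjH (symmetric, irreflexive).
   G_n: simple graph on vertex set {1..n}, adjacency aG (symmetric, irreflexive). *)

definition simple_graph_on :: "nat set \<Rightarrow> (nat \<Rightarrow> nat \<Rightarrow> bool) \<Rightarrow> bool" where
  "simple_graph_on V adj \<longleftrightarrow>
     (\<forall>x y. adj x y \<longrightarrow> x \<in> V \<and> y \<in> V) \<and> (\<forall>x y. adj x y \<longrightarrow> adj y x) \<and> (\<forall>x. \<not> adj x x)"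

definition connected_graph :: "nat \<Rightarrow> (nat \<Rightarrow> nat \<Rightarrow> bool) \<Rightarrow> bool" where
  "connected_graph k adjH \<longleftrightarrow> k \<ge> 1 \<and>
     (\<forall>u<k. \<forall>v<k. (\<lambda>x y. adjH x y \<and> x < k \<and> y < k)\<^sup>*\<^sup>* u v)"

definition edgesH :: "nat \<Rightarrow> (nat \<Rightarrow> nat \<Rightarrow> bool) \<Rightarrow> (nat \<times> nat) set" where
  "edgesH k adjH = {(i,j). i < j \<and> j < k \<and> adjH i j}"

definition autH :: "nat \<Rightarrow> (nat \<Rightarrow> nat \<Rightarrow> bool) \<Rightarrow> (nat \<Rightarrow> nat) set" where
  "autH k adjH = {\<sigma> \<in> {0..<k} \<rightarrow>\<^sub>E {0..<k}. bij_betw \<sigma> {0..<k} {0..<k} \<and>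
      (\<forall>i<k. \<forall>j<k. adjH i j \<longleftrightarrow> adjH (\<sigma> i) (\<sigma> j))}"

(* V(G_n)_k: k-tuples of distinct vertices, as injective maps {0..<k} -> {1..n} *)
definition tuples :: "nat \<Rightarrow> nat \<Rightarrow> (nat \<Rightarrow> nat) set" where
  "tuples n k = {s \<in> {0..<k} \<rightarrow>\<^sub>E {1..n}. inj_on s {0..<k}}"

definition adjm :: "(nat \<Rightarrow> nat \<Rightarrow> bool) \<Rightarrow> nat \<Rightarrow> nat \<Rightarrow> real" where
  "adjm aG i j = (if aG i j then 1 else 0)"

definition MH :: "nat \<Rightarrow> (nat \<Rightarrow> nat \<Rightarrow> bool) \<Rightarrow> (nat \<Rightarrow> nat \<Rightarrow> bool) \<Rightarrow> (nat \<Rightarrow> nat) \<Rightarrow> real" where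
  "MH k adjH aG s = (\<Prod>(i,j)\<in>edgesH k adjH. adjm aG (s i) (s j))"

definition NHG :: "nat \<Rightarrow> (nat \<Rightarrow> nat \<Rightarrow> bool) \<Rightarrow> nat \<Rightarrow> (nat \<Rightarrow> nat \<Rightarrow> bool) \<Rightarrow> real" where
  "NHG k adjH n aG = (1 / real (card (autH k adjH))) * (\<Sum>s\<in>tuples n k. MH k adjH aG s)"

definition tH :: "nat \<Rightarrow> (nat \<Rightarrow> nat \<Rightarrow> bool) \<Rightarrow> nat \<Rightarrow> (nat \<Rightarrow> nat \<Rightarrow> bool) \<Rightarrow> nat set \<Rightarrow> real" where
  "tH k adjH n aG A = (1 / real (card (autH k adjH))) *
     (\<Sum>s\<in>{s \<in> tuples n k. A \<subseteq> s ` {0..<k}}. MH k adjH aG s)"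

definition Xs :: "nat \<Rightarrow> (nat \<Rightarrow> bool) \<Rightarrow> (nat \<Rightarrow> nat) \<Rightarrow> real" where
  "Xs k X s = (\<Prod>u<k. if X (s u) then 1 else 0)"

definition THG :: "nat \<Rightarrow> (nat \<Rightarrow> nat \<Rightarrow> bool) \<Rightarrow> nat \<Rightarrow> (nat \<Rightarrow> nat \<Rightarrow> bool) \<Rightarrow> (nat \<Rightarrow> bool) \<Rightarrow> real" where
  "THG k adjH n aG X = (1 / real (card (autH k adjH))) * (\<Sum>s\<in>tuples n k. MH k adjH aG s * Xs k X s)"

definition b_eps :: "nat \<Rightarrow> (nat \<Rightarrow> nat \<Rightarrow> bool) \<Rightarrow> nat \<Rightarrow> (nat \<Rightarrow> nat \<Rightarrow> bool) \<Rightarrow> real \<Rightarrow> real \<Rightarrow> (nat \<Rightarrow> nat) \<Rightarrow> real" where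
  "b_eps k adjH n aG p \<epsilon> s = (if \<forall>A. A \<subseteq> s ` {0..<k} \<and> A \<noteq> {} \<longrightarrow>
       tH k adjH n aG A \<le> \<epsilon> * p ^ card A * NHG k adjH n aG then 1 else 0)"

definition Tplus :: "nat \<Rightarrow> (nat \<Rightarrow> nat \<Rightarrow> bool) \<Rightarrow> nat \<Rightarrow> (nat \<Rightarrow> nat \<Rightarrow> bool) \<Rightarrow> real \<Rightarrow> real \<Rightarrow> (nat \<Rightarrow> bool) \<Rightarrow> real" where
  "Tplus k adjH n aG p \<epsilon> X = (1 / real (card (autH k adjH))) *
     (\<Sum>s\<in>tuples n k. MH k adjH aG s * Xs k X s * b_eps k adjH n aG p \<epsilon> s)"

definition Xlaw :: "nat \<Rightarrow> real \<Rightarrow> (nat \<Rightarrow> bool) pmf" where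
  "Xlaw n p = Pi_pmf {1..n} False (\<lambda>_. bernoulli_pmf p)"

definition Nplus :: "nat \<Rightarrow> (nat \<Rightarrow> nat \<Rightarrow> bool) \<Rightarrow> nat \<Rightarrow> (nat \<Rightarrow> nat \<Rightarrow> bool) \<Rightarrow> real \<Rightarrow> real \<Rightarrow> real" where
  "Nplus k adjH n aG p \<epsilon> = (1 / p ^ k) *
     measure_pmf.expectation (Xlaw n p) (Tplus k adjH n aG p \<epsilon>)"

definition Mn :: "nat \<Rightarrow> (nat \<Rightarrow> nat \<Rightarrow> bool) \<Rightarrow> nat \<Rightarrow> (nat \<Rightarrow> nat \<Rightarrow> bool) \<Rightarrow> real \<Rightarrow> real \<Rightarrow> real" where
  "Mn k adjH n aG p \<epsilon> = (\<Sum>A\<in>{A. A \<subseteq> {1..n} \<and> 1 \<le> card A \<and> card A \<le> k}.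
      tH k adjH n aG A * (if tH k adjH n aG A > \<epsilon> * p ^ card A * NHG k adjH n aG then 1 else 0))"

end

theory Submission
  imports Defs
begin

lemma Xlaw_fin: "finite (set_pmf (Xlaw n p))"
proof -
  have "set_pmf (Xlaw n p) = PiE_dflt {1..n} False (set_pmf \<circ> (\<lambda>_. bernoulli_pmf p))"
    unfolding Xlaw_def by (rule set_Pi_pmf) simp
  also have "finite \<dots>" by (intro finite_PiE_dflt) auto
  finally show ?thesis .
qed

lemma Xlaw_int: "integrable (measure_pmf (Xlaw n p)) (f :: _ \<Rightarrow> real)"
  by (rule integrable_measure_pmf_finite[OF Xlaw_fin])

lemma prod_ind: "finite B \<Longrightarrow> (\<Prod>v\<in>B. if X v then 1 else 0 :: real) = (if \<forall>v\<in>B. X v then 1 else 0)"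
  by (induction B rule: finite_induct) auto

lemma E_prod:
  assumes "0 \<le> p" "p \<le> 1" "B \<subseteq> {1..n}"
  shows "measure_pmf.expectation (Xlaw n p) (\<lambda>X. \<Prod>v\<in>B. if X v then 1 else 0) = p ^ card B"
proof -
  let ?f = "\<lambda>x (v::bool). if x \<in> B then (if v then 1 else 0) else (1::real)"
  have eq: "(\<Prod>v\<in>B. if X v then 1 else 0) = (\<Prod>x\<in>{1..n}. ?f x (X x))" for X
    using assms(3) by (intro prod.mono_neutral_cong_left) auto
  have "measure_pmf.expectation (Xlaw n p) (\<lambda>X. \<Prod>x\<in>{1..n}. ?f x (X x))
      = (\<Prod>x\<in>{1..n}. measure_pmf.expectation (bernoulli_pmf p) (\<lambda>v. ?f x v))"
    unfolding Xlaw_def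
    by (rule expectation_prod_Pi_pmf) (auto intro: integrable_measure_pmf_finite)
  also have "\<dots> = (\<Prod>x\<in>{1..n}. if x \<in> B then p else 1)"
    using assms by (intro prod.cong) auto
  also have "\<dots> = (\<Prod>x\<in>B. p)"
    using prod.inter_restrict[of "{1..n}" "\<lambda>_. p" B] assms(3) by (simp add: Int_absorb1)
  finally show ?thesis by (simp add: eq)
qed

lemma prob_all:
  assumes "0 \<le> p" "p \<le> 1" "B \<subseteq> {1..n}"
  shows "measure_pmf.prob (Xlaw n p) {X. \<forall>v\<in>B. X v} = p ^ card B"
proof -
  have fin: "finite B" using assms(3) finite_subset by blast
  have "measure_pmf.prob (Xlaw n p) {X. \<forall>v\<in>B. X v} =
     measure_pmf.expectation (Xlaw n p) (indicator {X. \<forall>v\<in>B. X v})" by simp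
  also have "\<dots> = measure_pmf.expectation (Xlaw n p) (\<lambda>X. \<Prod>v\<in>B. if X v then 1 else 0)"
    by (intro Bochner_Integration.integral_cong refl) (simp add: prod_ind[OF fin] indicator_def)
  finally show ?thesis using E_prod[OF assms] by simp
qed

lemma Xs_eq: "s \<in> tuples n k \<Longrightarrow> Xs k X s = (\<Prod>v\<in>s ` {0..<k}. if X v then 1 else 0)"
  unfolding Xs_def tuples_def
  by (subst prod.reindex) (auto simp: atLeast0LessThan)

lemma E_Xs: "0 \<le> p \<Longrightarrow> p \<le> 1 \<Longrightarrow> s \<in> tuples n k \<Longrightarrow>
   measure_pmf.expectation (Xlaw n p) (\<lambda>X. Xs k X s) = p ^ k"
proof -
  assume a: "0 \<le> p" "p \<le> 1" "s \<in> tuples n k"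
  have sub: "s ` {0..<k} \<subseteq> {1..n}" and inj: "inj_on s {0..<k}" using a(3) unfolding tuples_def by auto
  have "measure_pmf.expectation (Xlaw n p) (\<lambda>X. Xs k X s) = p ^ card (s ` {0..<k})"
    using E_prod[OF a(1,2) sub] by (simp add: Xs_eq[OF a(3)])
  then show ?thesis using card_image[OF inj] by simp
qed


theorem lemma3p1:
  fixes k n :: nat and adjH aG :: "nat \<Rightarrow> nat \<Rightarrow> bool" and p \<epsilon> :: real
  assumes "simple_graph_on {0..<k} adjH" and "connected_graph k adjH"
    and "simple_graph_on {1..n} aG"
    and "NHG k adjH n aG > 0"
    and "0 < p" and "p < 1" and "\<epsilon> > 0"
  shows "Mn k adjH n aG p \<epsilon> / (2 ^ k - 1) \<le> NHG k adjH n aG - Nplus k adjH n aG p \<epsilon>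
       \<and> NHG k adjH n aG - Nplus k adjH n aG p \<epsilon> \<le> Mn k adjH n aG p \<epsilon>
       \<and> measure_pmf.prob (Xlaw n p) {X. THG k adjH n aG X \<noteq> Tplus k adjH n aG p \<epsilon> X}
           \<le> Mn k adjH n aG p \<epsilon> / (\<epsilon> * NHG k adjH n aG)"
proof -
  define a where "a = real (card (autH k adjH))"
  define N where "N = NHG k adjH n aG"
  define T where "T = tuples n k"
  define M where "M = MH k adjH aG"
  define b where "b = b_eps k adjH n aG p \<epsilon>"
  define t where "t = tH k adjH n aG"
  define Bad where "Bad = {A. A \<subseteq> {1..n} \<and> 1 \<le> card A \<and> card A \<le> k \<and> t A > \<epsilon> * p ^ card A * N}"
  define C where "C = (\<lambda>s. {A\<in>Bad. A \<subseteq> s ` {0..<k}})"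
  have Npos: "N > 0" using assms(4) N_def by simp
  have k1: "k \<ge> 1" using assms(2) unfolding connected_graph_def by simp
  have N_eq: "N = (1/a) * (\<Sum>s\<in>T. M s)" unfolding N_def NHG_def a_def T_def M_def by simp
  have apos: "a > 0"
  proof (rule ccontr)
    assume "\<not> a > 0" then have "a = 0" unfolding a_def by simp
    then show False using Npos N_eq by simp
  qed
  have finT: "finite T" unfolding T_def tuples_def
    by (rule finite_subset[of _ "{0..<k} \<rightarrow>\<^sub>E {1..n}"]) (auto intro: finite_PiE)
  have Mnn: "M s \<ge> 0" for s unfolding M_def MH_def adjm_def
    by (intro prod_nonneg) (auto split: prod.splits)
  have b01: "b s = 0 \<or> b s = 1" for s unfolding b_def b_eps_def by simp
  have t_eq: "t A = (1/a) * (\<Sum>s\<in>{s\<in>T. A \<subseteq> s ` {0..<k}}. M s)" for A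
    unfolding t_def tH_def a_def T_def M_def by simp
  have finBad: "finite Bad"
    by (rule finite_subset[of _ "Pow {1..n}"]) (auto simp: Bad_def)
  have Mn_eq: "Mn k adjH n aG p \<epsilon> = (\<Sum>A\<in>Bad. t A)"
  proof -
    have fin: "finite {A. A \<subseteq> {1..n} \<and> 1 \<le> card A \<and> card A \<le> k}"
      by (rule finite_subset[of _ "Pow {1..n}"]) auto
    have "Mn k adjH n aG p \<epsilon> = (\<Sum>A\<in>{A. A \<subseteq> {1..n} \<and> 1 \<le> card A \<and> card A \<le> k}.
        if t A > \<epsilon> * p ^ card A * N then t A else 0)"
      unfolding Mn_def t_def N_def by (intro sum.cong) auto
    also have "\<dots> = (\<Sum>A\<in>Bad. t A)"
      unfolding Bad_def using sum.inter_filter[OF fin, of t "\<lambda>A. t A > \<epsilon> * p ^ card A * N"]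
      by (simp add: conj_assoc)
    finally show ?thesis .
  qed
  have swap: "(\<Sum>A\<in>Bad. t A) = (1/a) * (\<Sum>s\<in>T. M s * real (card (C s)))"
  proof -
    have "(\<Sum>A\<in>Bad. t A) = (1/a) * (\<Sum>A\<in>Bad. \<Sum>s\<in>T. if A \<subseteq> s ` {0..<k} then M s else 0)"
      unfolding t_eq sum_distrib_left[symmetric]
      by (simp add: sum.inter_filter[OF finT, of M, symmetric])
    also have "(\<Sum>A\<in>Bad. \<Sum>s\<in>T. if A \<subseteq> s ` {0..<k} then M s else 0)
        = (\<Sum>s\<in>T. \<Sum>A\<in>Bad. if A \<subseteq> s ` {0..<k} then M s else 0)"
      by (rule sum.swap)
    also have "\<dots> = (\<Sum>s\<in>T. M s * real (card (C s)))"
    proof (intro sum.cong refl)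
      fix s
      have "(\<Sum>A\<in>Bad. if A \<subseteq> s ` {0..<k} then M s else 0) = (\<Sum>A\<in>C s. M s)"
        unfolding C_def using sum.inter_filter[OF finBad, of "\<lambda>_. M s"] by simp
      then show "(\<Sum>A\<in>Bad. if A \<subseteq> s ` {0..<k} then M s else 0) = M s * real (card (C s))"
        by simp
    qed
    finally show ?thesis .
  qed
  have Cprops: "(b s = 1 \<longrightarrow> C s = {}) \<and> (b s = 0 \<longrightarrow> C s \<noteq> {}) \<and> card (C s) \<le> 2 ^ k - 1"
    if sT: "s \<in> T" for s
  proof -
    have sub: "s ` {0..<k} \<subseteq> {1..n}" and inj: "inj_on s {0..<k}" using sT unfolding T_def tuples_def by auto
    have ck: "card (s ` {0..<k}) = k" using card_image[OF inj] by simp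
    have Ceq: "C s = {A. A \<subseteq> s ` {0..<k} \<and> A \<noteq> {} \<and> t A > \<epsilon> * p ^ card A * N}"
    proof -
      have "A \<in> C s \<longleftrightarrow> A \<subseteq> s ` {0..<k} \<and> A \<noteq> {} \<and> t A > \<epsilon> * p ^ card A * N" for A
      proof
        assume "A \<in> C s" then show "A \<subseteq> s ` {0..<k} \<and> A \<noteq> {} \<and> t A > \<epsilon> * p ^ card A * N"
          unfolding C_def Bad_def by auto
      next
        assume h: "A \<subseteq> s ` {0..<k} \<and> A \<noteq> {} \<and> t A > \<epsilon> * p ^ card A * N"
        have fA: "finite A" using h finite_subset by blast
        have "card A \<le> k" using card_mono[of "s ` {0..<k}" A] h ck by simp
        moreover have "1 \<le> card A" using fA h by (simp add: Suc_le_eq card_gt_0_iff)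
        moreover have "A \<subseteq> {1..n}" using h sub by blast
        ultimately show "A \<in> C s" unfolding C_def Bad_def using h by blast
      qed
      then show ?thesis by blast
    qed
    have "card (C s) \<le> card (Pow (s ` {0..<k}) - {{}})"
      by (rule card_mono) (auto simp: Ceq)
    also have "\<dots> = 2 ^ k - 1" by (simp add: card_Pow ck)
    finally have c: "card (C s) \<le> 2 ^ k - 1" .
    have "b s = 1 \<longleftrightarrow> C s = {}" unfolding Ceq b_def b_eps_def t_def N_def by auto
    then show ?thesis using c b01[of s] by auto
  qed
  have cbounds: "1 - b s \<le> real (card (C s)) \<and> real (card (C s)) \<le> (2 ^ k - 1) * (1 - b s)"
    if sT: "s \<in> T" for s
  proof -
    have fC: "finite (C s)" using finBad unfolding C_def by simp
    have ck: "real (card (C s)) \<le> 2 ^ k - 1"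
    proof -
      have "real (card (C s)) \<le> real (2 ^ k - 1 :: nat)" using Cprops[OF sT] by (simp only: of_nat_le_iff)
      moreover have "(1::nat) \<le> 2 ^ k" by simp
      then have "real (2 ^ k - 1 :: nat) = 2 ^ k - 1" by (simp add: of_nat_diff)
      ultimately show ?thesis by simp
    qed
    show ?thesis
    proof (cases "b s = 1")
      case True then show ?thesis using Cprops[OF sT] by simp
    next
      case False then have "b s = 0" using b01 by blast
      then have "C s \<noteq> {}" using Cprops[OF sT] by blast
      then have "card (C s) \<ge> 1" using fC by (simp add: Suc_le_eq card_gt_0_iff)
      then show ?thesis using ck \<open>b s = 0\<close> by simp
    qed
  qed
  have Nplus_eq: "Nplus k adjH n aG p \<epsilon> = (1/a) * (\<Sum>s\<in>T. M s * b s)"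
  proof -
    have "measure_pmf.expectation (Xlaw n p) (Tplus k adjH n aG p \<epsilon>)
       = (1/a) * measure_pmf.expectation (Xlaw n p) (\<lambda>X. \<Sum>s\<in>T. M s * Xs k X s * b s)"
      unfolding Tplus_def a_def T_def M_def b_def by simp
    also have "measure_pmf.expectation (Xlaw n p) (\<lambda>X. \<Sum>s\<in>T. M s * Xs k X s * b s)
       = (\<Sum>s\<in>T. measure_pmf.expectation (Xlaw n p) (\<lambda>X. M s * Xs k X s * b s))"
      by (rule Bochner_Integration.integral_sum) (rule Xlaw_int)
    also have "\<dots> = (\<Sum>s\<in>T. M s * b s * p ^ k)"
    proof (intro sum.cong refl)
      fix s assume sT: "s \<in> T"
      have "(\<lambda>X. M s * Xs k X s * b s) = (\<lambda>X. (M s * b s) * Xs k X s)" by (auto simp: mult_ac)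
      then show "measure_pmf.expectation (Xlaw n p) (\<lambda>X. M s * Xs k X s * b s) = M s * b s * p ^ k"
        using E_Xs[of p s n k] sT assms(5,6) unfolding T_def by simp
    qed
    finally show ?thesis unfolding Nplus_def using assms(5)
      by (simp add: sum_distrib_right[symmetric])
  qed
  have diff_eq: "N - Nplus k adjH n aG p \<epsilon> = (1/a) * (\<Sum>s\<in>T. M s * (1 - b s))"
    unfolding N_eq Nplus_eq by (simp add: algebra_simps sum_subtractf)
  have Mn_eq2: "Mn k adjH n aG p \<epsilon> = (1/a) * (\<Sum>s\<in>T. M s * real (card (C s)))"
    using Mn_eq swap by simp
  have S1: "(\<Sum>s\<in>T. M s * (1 - b s)) \<le> (\<Sum>s\<in>T. M s * real (card (C s)))"
    by (intro sum_mono mult_left_mono) (use cbounds Mnn in auto)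
  have S2: "(\<Sum>s\<in>T. M s * real (card (C s))) \<le> (2 ^ k - 1) * (\<Sum>s\<in>T. M s * (1 - b s))"
    unfolding sum_distrib_left
    by (intro sum_mono) (use cbounds Mnn in \<open>auto simp: mult_left_mono mult.left_commute\<close>)
  have P2: "N - Nplus k adjH n aG p \<epsilon> \<le> Mn k adjH n aG p \<epsilon>"
    unfolding diff_eq Mn_eq2 using S1 apos by (simp add: divide_right_mono)
  have "(2::real) ^ 1 \<le> 2 ^ k" by (rule power_increasing) (use k1 in auto)
  then have kpos: "(2::real) ^ k - 1 > 0" by simp
  have "Mn k adjH n aG p \<epsilon> \<le> (2 ^ k - 1) * (N - Nplus k adjH n aG p \<epsilon>)"
    unfolding diff_eq Mn_eq2 using S2 apos by (simp add: divide_right_mono mult.left_commute)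
  then have P1: "Mn k adjH n aG p \<epsilon> / (2 ^ k - 1) \<le> N - Nplus k adjH n aG p \<epsilon>"
    using kpos by (simp add: divide_le_eq mult.commute)
  have subU: "{X. THG k adjH n aG X \<noteq> Tplus k adjH n aG p \<epsilon> X} \<subseteq> (\<Union>A\<in>Bad. {X. \<forall>v\<in>A. X v})"
  proof
    fix X assume "X \<in> {X. THG k adjH n aG X \<noteq> Tplus k adjH n aG p \<epsilon> X}"
    then have ne: "(\<Sum>s\<in>T. M s * Xs k X s) \<noteq> (\<Sum>s\<in>T. M s * Xs k X s * b s)"
      unfolding THG_def Tplus_def T_def M_def b_def by auto
    then obtain s where sT: "s \<in> T" and nes: "M s * Xs k X s \<noteq> M s * Xs k X s * b s"
      by (meson sum.cong)
    then have "b s \<noteq> 1" by auto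
    then have "b s = 0" using b01 by blast
    then obtain A where A: "A \<in> Bad" "A \<subseteq> s ` {0..<k}" using Cprops[OF sT] unfolding C_def by auto
    have "Xs k X s \<noteq> 0" using nes by auto
    then have "\<forall>u\<in>{..<k}. X (s u)" unfolding Xs_def by (auto simp: prod_ind split: if_splits)
    then have "\<forall>v\<in>A. X v" using A(2) by auto
    then show "X \<in> (\<Union>A\<in>Bad. {X. \<forall>v\<in>A. X v})" using A(1) by auto
  qed
  have "measure_pmf.prob (Xlaw n p) {X. THG k adjH n aG X \<noteq> Tplus k adjH n aG p \<epsilon> X}
     \<le> measure_pmf.prob (Xlaw n p) (\<Union>A\<in>Bad. {X. \<forall>v\<in>A. X v})"
    by (rule measure_pmf.finite_measure_mono[OF subU]) simp
  also have "\<dots> \<le> (\<Sum>A\<in>Bad. measure_pmf.prob (Xlaw n p) {X. \<forall>v\<in>A. X v})"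
    by (rule measure_pmf.finite_measure_subadditive_finite[OF finBad]) simp
  also have "\<dots> = (\<Sum>A\<in>Bad. p ^ card A)"
    by (intro sum.cong refl prob_all) (use assms(5,6) in \<open>auto simp: Bad_def\<close>)
  also have "\<dots> \<le> (\<Sum>A\<in>Bad. t A / (\<epsilon> * N))"
  proof (intro sum_mono)
    fix A assume "A \<in> Bad"
    then have "\<epsilon> * p ^ card A * N < t A" unfolding Bad_def by simp
    then show "p ^ card A \<le> t A / (\<epsilon> * N)" using Npos assms(7)
      by (simp add: pos_le_divide_eq mult_ac)
  qed
  also have "\<dots> = Mn k adjH n aG p \<epsilon> / (\<epsilon> * N)"
    unfolding Mn_eq by (simp add: sum_divide_distrib)
  finally have P3: "measure_pmf.prob (Xlaw n p) {X. THG k adjH n aG X \<noteq> Tplus k adjH n aG p \<epsilon> X}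
     \<le> Mn k adjH n aG p \<epsilon> / (\<epsilon> * N)" .
  show ?thesis using P1 P2 P3 unfolding N_def by simp
qed

end
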